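(* Let $(X,\mathcal{B},\mu,T)$ be a rigid measure preserving system (with $\mu$ $\sigma$-finite on a standard space). Then every quasi-factor of $(X,\mathcal{B},\mu,T)$ is rigid.
   Context: A measure preserving system $(X,\mathcal{B},\mu,T)$ is rigid if there is a strictly increasing sequence $(n_k)_{k\ge0}$ of integers such that $T^{n_k}f\to f$ in $L^2(\mu)$ for all $f\in L^2(\mu)$ (equivalently, $\mu(T^{-n_k}A\triangle A)\to0$ for all $A\in\mathcal{B}$ of finite measure). $X^*$ denotes the set of all measures on $(X,\mathcal{B})$, with $\sigma$-algebra $\mathcal{B}^*$ generated by the sets $\{\gamma:\gamma(B)\in[a,b]\}$, $B\in\mathcal{B}$, $0\le a\le b\le\infty$, and $T_*\gamma=\gamma\circ T^{-1}$. A quasi-factor of $(X,\mathcal{B},\mu,T)$ is a probability preserving system $(X^*,\mathcal{B}^*,\xi,T_* )$ where $\xi$ is a $T_*$-invariant probability on $X^*$ with barycenter $\mu$, i.e. $\int f\,d\mu=\int\big(\int f\,d\gamma\big)d\xi(\gamma)$ for all $f\in L^1(\mu)$. *)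

theory Defs
  imports "HOL-Probability.Probability"
begin

definition mps :: "'a measure \<Rightarrow> ('a \<Rightarrow> 'a) \<Rightarrow> bool" where
  "mps M T \<longleftrightarrow> T \<in> measurable M M \<and> distr M M T = M"

definition rigid :: "'a measure \<Rightarrow> ('a \<Rightarrow> 'a) \<Rightarrow> bool" where
  "rigid M T \<longleftrightarrow> (\<exists>n :: nat \<Rightarrow> nat. strict_mono n \<and>
     (\<forall>A \<in> sets M. emeasure M A < \<infinity> \<longrightarrow>
        ((\<lambda>k. emeasure M ((((T ^^ n k) -` A \<inter> space M) - A) \<union> (A - ((T ^^ n k) -` A \<inter> space M))))
          \<longlongrightarrow> 0) sequentially))"

definition standard_borel_via :: "'a measure \<Rightarrow> 'b::polish_space set \<Rightarrow> bool" where
  "standard_borel_via M S \<longleftrightarrow> S \<in> sets borel \<and>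
     (\<exists>f g. f \<in> M \<rightarrow>\<^sub>M restrict_space borel S \<and> g \<in> restrict_space borel S \<rightarrow>\<^sub>M M \<and>
        (\<forall>x \<in> space M. g (f x) = x) \<and> (\<forall>y \<in> S. f (g y) = y))"

definition Xstar :: "'a measure \<Rightarrow> 'a measure measure" where
  "Xstar M = sigma {\<gamma>. sets \<gamma> = sets M}
     {{\<gamma>. sets \<gamma> = sets M \<and> emeasure \<gamma> B \<in> {a..b}} | B a b. B \<in> sets M \<and> a \<le> b}"

definition Tstar :: "'a measure \<Rightarrow> ('a \<Rightarrow> 'a) \<Rightarrow> 'a measure \<Rightarrow> 'a measure" where
  "Tstar M T \<gamma> = distr \<gamma> M T"

definition quasi_factor :: "'a measure \<Rightarrow> ('a \<Rightarrow> 'a) \<Rightarrow> 'a measure measure \<Rightarrow> bool" where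
  "quasi_factor M T \<xi> \<longleftrightarrow> prob_space \<xi> \<and> sets \<xi> = sets (Xstar M) \<and>
     distr \<xi> \<xi> (Tstar M T) = \<xi> \<and>
     (\<forall>f \<in> borel_measurable M.
        (\<integral>\<^sup>+ x. f x \<partial>M) = (\<integral>\<^sup>+ \<gamma>. (\<integral>\<^sup>+ x. f x \<partial>\<gamma>) \<partial>\<xi>))"

end

theory Submission
  imports Defs
begin


definition sd :: "'a set \<Rightarrow> 'a set \<Rightarrow> 'a set" where
  "sd X Y = (X - Y) \<union> (Y - X)"

lemma funpow_meas:
  assumes "S \<in> measurable M M"
  shows "(S ^^ j) \<in> measurable M M"
  by (induction j) (auto intro: measurable_compose[OF _ assms] simp: measurable_ident)

lemma funpow_pres:
  assumes S: "S \<in> measurable M M" and d: "distr M M S = M" and A: "A \<in> sets M"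
  shows "emeasure M ((S ^^ j) -` A \<inter> space M) = emeasure M A"
  using A
proof (induction j arbitrary: A)
  case 0 then show ?case by (simp add: sets.Int_space_eq2)
next
  case (Suc j)
  have SA: "S -` A \<inter> space M \<in> sets M" using S Suc.prems by (rule measurable_sets)
  have "(S ^^ Suc j) -` A \<inter> space M = (S ^^ j) -` (S -` A \<inter> space M) \<inter> space M"
    using measurable_space[OF funpow_meas[OF S, of j]] by (auto simp: funpow_Suc_right[of j] )
  also have "emeasure M \<dots> = emeasure M (S -` A \<inter> space M)" using Suc.IH[OF SA] .
  also have "\<dots> = emeasure (distr M M S) A" using emeasure_distr[OF S Suc.prems] by simp
  also have "\<dots> = emeasure M A" using d by simp
  finally show ?case .
qed

lemma funpow_pres_measure:
  assumes S: "S \<in> measurable M M" and d: "distr M M S = M" and A: "A \<in> sets M"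
  shows "measure M ((S ^^ j) -` A \<inter> space M) = measure M A"
  using funpow_pres[OF assms] by (simp add: measure_def)

definition rigC :: "'a measure \<Rightarrow> ('a \<Rightarrow> 'a) \<Rightarrow> (nat \<Rightarrow> nat) \<Rightarrow> 'a set set" where
  "rigC P S n = {A \<in> sets P. (\<lambda>k. measure P (sd ((S ^^ n k) -` A \<inter> space P) A)) \<longlonglongrightarrow> 0}"

lemma rigC_Un:
  assumes P: "prob_space P" and S: "S \<in> measurable P P"
    and X: "X \<in> rigC P S n" and Y: "Y \<in> rigC P S n"
  shows "X \<union> Y \<in> rigC P S n"
proof -
  interpret prob_space P by fact
  let ?p = "\<lambda>k Z. (S ^^ n k) -` Z \<inter> space P"
  have XY: "X \<in> sets P" "Y \<in> sets P" using X Y by (auto simp: rigC_def)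
  have mp: "\<And>k Z. Z \<in> sets P \<Longrightarrow> ?p k Z \<in> sets P"
    using funpow_meas[OF S] by (auto intro: measurable_sets)
  have le: "measure P (sd (?p k (X \<union> Y)) (X \<union> Y)) \<le> measure P (sd (?p k X) X) + measure P (sd (?p k Y) Y)" for k
  proof -
    have "sd (?p k (X \<union> Y)) (X \<union> Y) \<subseteq> sd (?p k X) X \<union> sd (?p k Y) Y"
      by (auto simp: sd_def)
    then have "measure P (sd (?p k (X \<union> Y)) (X \<union> Y)) \<le> measure P (sd (?p k X) X \<union> sd (?p k Y) Y)"
      using XY mp by (intro finite_measure_mono) (auto simp: sd_def)
    also have "\<dots> \<le> measure P (sd (?p k X) X) + measure P (sd (?p k Y) Y)"
      using XY mp by (intro measure_Un_le) (auto simp: sd_def)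
    finally show ?thesis .
  qed
  have "(\<lambda>k. measure P (sd (?p k X) X) + measure P (sd (?p k Y) Y)) \<longlonglongrightarrow> 0 + 0"
    using X Y by (intro tendsto_add) (auto simp: rigC_def)
  moreover have "eventually (\<lambda>k. 0 \<le> measure P (sd (?p k (X \<union> Y)) (X \<union> Y))) sequentially"
    by simp
  moreover have "eventually (\<lambda>k. measure P (sd (?p k (X \<union> Y)) (X \<union> Y)) \<le> measure P (sd (?p k X) X) + measure P (sd (?p k Y) Y)) sequentially"
    by (intro always_eventually allI le)
  ultimately have "(\<lambda>k. measure P (sd (?p k (X \<union> Y)) (X \<union> Y))) \<longlonglongrightarrow> 0"
    using real_tendsto_sandwich[of "\<lambda>_. 0" _ sequentially] by auto
  then show ?thesis using XY by (auto simp: rigC_def)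
qed

lemma rigC_empty: "{} \<in> rigC P S n"
  by (auto simp: rigC_def sd_def)

lemma rigC_finUN:
  fixes A :: "nat \<Rightarrow> 'a set" and m :: nat
  assumes P: "prob_space P" and S: "S \<in> measurable P P"
    and A: "\<And>i. A i \<in> rigC P S n"
  shows "(\<Union>i<m. A i) \<in> rigC P S n"
proof (induction m)
  case 0 then show ?case by (simp add: rigC_empty)
next
  case (Suc m)
  have "(\<Union>i<Suc m. A i) = A m \<union> (\<Union>i<m. A i)" by (auto simp: lessThan_Suc)
  then show ?case using rigC_Un[OF P S A Suc.IH] by simp
qed

lemma rigC_sigma:
  assumes P: "prob_space P" and S: "S \<in> measurable P P" and d: "distr P P S = P"
  shows "sigma_algebra (space P) (rigC P S n)"
  unfolding sigma_algebra_iff2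
proof (intro conjI ballI allI impI)
  interpret prob_space P by fact
  let ?p = "\<lambda>k Z. (S ^^ n k) -` Z \<inter> space P"
  have mp: "\<And>k Z. Z \<in> sets P \<Longrightarrow> ?p k Z \<in> sets P"
    using funpow_meas[OF S] by (auto intro: measurable_sets)
  have msp: "\<And>k x. x \<in> space P \<Longrightarrow> (S ^^ n k) x \<in> space P"
    using funpow_meas[OF S] by (auto intro: measurable_space)
  show "rigC P S n \<subseteq> Pow (space P)" using sets.sets_into_space by (auto simp: rigC_def)
  show "{} \<in> rigC P S n" by (rule rigC_empty)
  fix s assume s: "s \<in> rigC P S n"
  then have ss: "s \<in> sets P" by (auto simp: rigC_def)
  have "sd (?p k (space P - s)) (space P - s) = sd (?p k s) s" for k
    using sets.sets_into_space[OF ss] msp by (auto simp: sd_def)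
  then show "space P - s \<in> rigC P S n" using s ss by (auto simp: rigC_def)
next
  interpret prob_space P by fact
  let ?p = "\<lambda>k Z. (S ^^ n k) -` Z \<inter> space P"
  have mp: "\<And>k Z. Z \<in> sets P \<Longrightarrow> ?p k Z \<in> sets P"
    using funpow_meas[OF S] by (auto intro: measurable_sets)
  fix A :: "nat \<Rightarrow> _" assume A: "range A \<subseteq> rigC P S n"
  define F where "F m = (\<Union>i<m. A i)" for m
  define U where "U = (\<Union>i. A i)"
  have As: "A i \<in> sets P" for i using A by (auto simp: rigC_def)
  have FC: "F m \<in> rigC P S n" for m unfolding F_def using A by (intro rigC_finUN[OF P S]) auto
  have Fs: "F m \<in> sets P" for m using FC by (auto simp: rigC_def)
  have Us: "U \<in> sets P" unfolding U_def using As by auto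
  have FU: "F m \<subseteq> U" for m by (auto simp: F_def U_def)
  have "(\<Union>m. F m) = U" by (auto simp: F_def U_def)
  moreover have "incseq F" unfolding incseq_def F_def by (intro allI impI UN_mono) auto
  ultimately have "(\<lambda>m. measure P (F m)) \<longlonglongrightarrow> measure P U"
    using finite_Lim_measure_incseq[of F] Fs by auto
  then have "(\<lambda>m. measure P U - measure P (F m)) \<longlonglongrightarrow> measure P U - measure P U"
    by (intro tendsto_diff) auto
  moreover have "measure P (U - F m) = measure P U - measure P (F m)" for m
    using finite_measure_Diff[OF Us Fs FU] .
  ultimately have r: "(\<lambda>m. measure P (U - F m)) \<longlonglongrightarrow> 0" by simp
  have key: "measure P (sd (?p k U) U) \<le> 2 * measure P (U - F m) + measure P (sd (?p k (F m)) (F m))" for k m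
  proof -
    have "sd (?p k U) U \<subseteq> (?p k (U - F m) \<union> (U - F m)) \<union> sd (?p k (F m)) (F m)"
      using FU[of m] by (auto simp: sd_def)
    then have "measure P (sd (?p k U) U) \<le> measure P ((?p k (U - F m) \<union> (U - F m)) \<union> sd (?p k (F m)) (F m))"
      using Us Fs mp by (intro finite_measure_mono) (auto simp: sd_def)
    also have "\<dots> \<le> measure P (?p k (U - F m) \<union> (U - F m)) + measure P (sd (?p k (F m)) (F m))"
      using Us Fs mp by (intro measure_Un_le) (auto simp: sd_def)
    also have "measure P (?p k (U - F m) \<union> (U - F m)) \<le> measure P (?p k (U - F m)) + measure P (U - F m)"
      using Us Fs mp by (intro measure_Un_le) auto
    also have "measure P (?p k (U - F m)) = measure P (U - F m)"
      using funpow_pres_measure[OF S d] Us Fs by auto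
    finally show ?thesis by simp
  qed
  have "(\<lambda>k. measure P (sd (?p k U) U)) \<longlonglongrightarrow> 0"
  proof (rule LIMSEQ_I)
    fix e :: real assume e: "0 < e"
    from r e obtain m where m: "measure P (U - F m) < e / 3"
      using LIMSEQ_D[OF r, of "e/3"] by fastforce
    from FC[of m] e obtain N where N: "\<And>k. k \<ge> N \<Longrightarrow> norm (measure P (sd (?p k (F m)) (F m)) - 0) < e / 3"
    proof -
      have "(\<lambda>k. measure P (sd (?p k (F m)) (F m))) \<longlonglongrightarrow> 0" using FC[of m] by (simp add: rigC_def)
      from LIMSEQ_D[OF this, of "e/3"] e show ?thesis using that by auto
    qed
    show "\<exists>N. \<forall>k\<ge>N. norm (measure P (sd (?p k U) U) - 0) < e"
    proof (intro exI allI impI)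
      fix k assume "k \<ge> N"
      then have "measure P (sd (?p k (F m)) (F m)) < e / 3" using N by auto
      then show "norm (measure P (sd (?p k U) U) - 0) < e"
        using key[of k m] m by auto
    qed
  qed
  then show "(\<Union>i. A i) \<in> rigC P S n" using Us by (auto simp: rigC_def U_def)
qed




lemma Tstar_iter:
  assumes T: "T \<in> measurable M M" and g: "sets \<gamma> = sets M"
  shows "sets ((Tstar M T ^^ j) \<gamma>) = sets M \<and>
    (\<forall>B\<in>sets M. emeasure ((Tstar M T ^^ j) \<gamma>) B = emeasure \<gamma> ((T ^^ j) -` B \<inter> space M))"
proof (induction j)
  case 0 then show ?case using g by (simp add: sets.Int_space_eq2)
next
  case (Suc j)
  let ?d = "(Tstar M T ^^ j) \<gamma>"
  have sd: "sets ?d = sets M" using Suc by simp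
  have Td: "T \<in> measurable ?d M" by (subst measurable_cong_sets[OF sd refl]) (rule T)
  have sp: "space ?d = space M" using sets_eq_imp_space_eq[OF sd] .
  have Tj: "(T ^^ j) \<in> measurable M M" by (rule funpow_meas[OF T])
  have "sets ((Tstar M T ^^ Suc j) \<gamma>) = sets M" by (simp add: Tstar_def)
  moreover have "emeasure ((Tstar M T ^^ Suc j) \<gamma>) B = emeasure \<gamma> ((T ^^ Suc j) -` B \<inter> space M)"
    if B: "B \<in> sets M" for B
  proof -
    have TB: "T -` B \<inter> space M \<in> sets M" using T B by (rule measurable_sets)
    have "emeasure ((Tstar M T ^^ Suc j) \<gamma>) B = emeasure (distr ?d M T) B" by (simp add: Tstar_def)
    also have "\<dots> = emeasure ?d (T -` B \<inter> space M)" using emeasure_distr[OF Td B] sp by simp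
    also have "\<dots> = emeasure \<gamma> ((T ^^ j) -` (T -` B \<inter> space M) \<inter> space M)" using Suc TB by simp
    also have "(T ^^ j) -` (T -` B \<inter> space M) \<inter> space M = (T ^^ Suc j) -` B \<inter> space M"
      using measurable_space[OF Tj] by (auto simp: funpow_Suc_right[of j])
    finally show ?thesis .
  qed
  ultimately show ?case by blast
qed

definition Gstar :: "'a measure \<Rightarrow> 'a measure set set" where
  "Gstar M = {{\<gamma>. sets \<gamma> = sets M \<and> emeasure \<gamma> B \<in> {a..b}} | B a b. B \<in> sets M \<and> a \<le> b}"

lemma Gstar_Pow: "Gstar M \<subseteq> Pow {\<gamma>. sets \<gamma> = sets M}"
  by (auto simp: Gstar_def)

lemma Xstar_eq: "Xstar M = sigma {\<gamma>. sets \<gamma> = sets M} (Gstar M)"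
  by (simp add: Xstar_def Gstar_def)

lemma space_Xstar: "space (Xstar M) = {\<gamma>. sets \<gamma> = sets M}"
  unfolding Xstar_eq by (rule space_measure_of[OF Gstar_Pow])

lemma sets_Xstar: "sets (Xstar M) = sigma_sets {\<gamma>. sets \<gamma> = sets M} (Gstar M)"
  unfolding Xstar_eq by (rule sets_measure_of[OF Gstar_Pow])

lemma emeasure_meas_Xstar:
  assumes B: "B \<in> sets M"
  shows "(\<lambda>\<gamma>. emeasure \<gamma> B) \<in> borel_measurable (Xstar M)"
proof (rule borel_measurableI_le)
  fix y :: ennreal
  have "{x \<in> space (Xstar M). emeasure x B \<le> y} = {\<gamma>. sets \<gamma> = sets M \<and> emeasure \<gamma> B \<in> {0..y}}"
    by (auto simp: space_Xstar)
  also have "\<dots> \<in> Gstar M" using B unfolding Gstar_def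
    by (intro CollectI exI[where x=B] exI[where x="0::ennreal"] exI[where x=y]) simp
  finally show "{x \<in> space (Xstar M). emeasure x B \<le> y} \<in> sets (Xstar M)"
    unfolding sets_Xstar by auto
qed

lemma Tstar_meas:
  assumes T: "T \<in> measurable M M"
  shows "Tstar M T \<in> measurable (Xstar M) (Xstar M)"
proof -
  have "Tstar M T \<in> measurable (Xstar M) (measure_of {\<gamma>. sets \<gamma> = sets M} (Gstar M) (\<lambda>_. 0))"
  proof (rule measurable_measure_of[OF Gstar_Pow])
    show "Tstar M T \<in> space (Xstar M) \<rightarrow> {\<gamma>. sets \<gamma> = sets M}"
      by (auto simp: space_Xstar Tstar_def)
    fix A assume "A \<in> Gstar M"
    then obtain B a b where A: "A = {\<gamma>. sets \<gamma> = sets M \<and> emeasure \<gamma> B \<in> {a..b}}" and B: "B \<in> sets M" and "a \<le> b"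
      by (auto simp: Gstar_def)
    have TB: "T -` B \<inter> space M \<in> sets M" using T B by (rule measurable_sets)
    have "Tstar M T -` A \<inter> space (Xstar M) = {\<gamma>. sets \<gamma> = sets M \<and> emeasure \<gamma> (T -` B \<inter> space M) \<in> {a..b}}"
    proof -
      have "emeasure (Tstar M T \<gamma>) B = emeasure \<gamma> (T -` B \<inter> space M)" if "sets \<gamma> = sets M" for \<gamma>
        using Tstar_iter[OF T that, of 1] B by simp
      then show ?thesis by (auto simp: A space_Xstar Tstar_def)
    qed
    also have "\<dots> \<in> Gstar M" using TB \<open>a \<le> b\<close> unfolding Gstar_def by blast
    finally show "Tstar M T -` A \<inter> space (Xstar M) \<in> sets (Xstar M)" unfolding sets_Xstar by auto
  qed
  then show ?thesis by (simp add: Xstar_eq)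
qed




lemma ennreal_ineq:
  fixes c d x y z :: ennreal
  assumes "c \<noteq> \<top>" "c + d < x" "x \<le> y + z" "y \<le> c"
  shows "d < z"
proof -
  have "c + d < c + z" using assms(2,3,4) by (meson add_right_mono order_less_le_trans)
  then show ?thesis using ennreal_add_left_cancel_less by blast
qed

lemma ennreal_small_eps:
  fixes c v :: ennreal
  assumes "c \<noteq> \<top>" "\<And>j::nat. v \<le> c + ennreal (1 / Suc j)"
  shows "v \<le> c"
proof (rule ccontr)
  assume "\<not> v \<le> c"
  then have cv: "c < v" by simp
  obtain r where r: "c = ennreal r" "0 \<le> r" using assms(1) ennreal_cases by (cases c) auto
  have "v \<noteq> \<top>" using assms(2)[of 0] r by (auto simp: top_unique ennreal_plus[symmetric] simp del: ennreal_plus)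
  then obtain t where t: "v = ennreal t" "0 \<le> t" by (cases v) auto
  have "r < t" using cv r t by (simp add: ennreal_less_iff)
  then obtain j where j: "1 / real (Suc j) < t - r"
    using reals_Archimedean[of "t - r"] \<open>r < t\<close> by (auto simp: inverse_eq_divide)
  have pl: "ennreal (r + 1 / Suc j) = ennreal r + ennreal (1 / Suc j)" by (rule ennreal_plus) (use r in auto)
  have "ennreal t \<le> ennreal (r + 1 / Suc j)" using assms(2)[of j] r t pl by simp
  then have "t \<le> r + 1 / Suc j" by (subst (asm) ennreal_le_iff) (use r in auto)
  then show False using j by simp
qed

locale qf =
  fixes M :: "'a measure" and T :: "'a \<Rightarrow> 'a" and \<xi> :: "'a measure measure"
  assumes P: "prob_space \<xi>" and sx: "sets \<xi> = sets (Xstar M)"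
    and d: "distr \<xi> \<xi> (Tstar M T) = \<xi>" and T: "T \<in> measurable M M"
    and bary: "\<forall>f \<in> borel_measurable M. (\<integral>\<^sup>+ x. f x \<partial>M) = (\<integral>\<^sup>+ \<gamma>. (\<integral>\<^sup>+ x. f x \<partial>\<gamma>) \<partial>\<xi>)"
begin

lemma space_xi: "space \<xi> = {\<gamma>. sets \<gamma> = sets M}"
  using sets_eq_imp_space_eq[OF sx] space_Xstar by simp

lemma S_meas: "Tstar M T \<in> measurable \<xi> \<xi>"
  using Tstar_meas[OF T] measurable_cong_sets[OF sx sx] by simp

lemma phi_meas: "B \<in> sets M \<Longrightarrow> (\<lambda>\<gamma>. emeasure \<gamma> B) \<in> borel_measurable \<xi>"
  by (subst measurable_cong_sets[OF sx refl]) (rule emeasure_meas_Xstar)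

lemma pre_eq:
  assumes B: "B \<in> sets M"
  shows "(Tstar M T ^^ j) -` {\<gamma>\<in>space \<xi>. Q (emeasure \<gamma> B)} \<inter> space \<xi>
       = {\<gamma>\<in>space \<xi>. Q (emeasure \<gamma> ((T ^^ j) -` B \<inter> space M))}"
  using Tstar_iter[OF T, of _ j] B by (auto simp: space_xi)

lemma markov_part:
  assumes D: "D \<in> sets M" and del: "0 < \<delta>"
  shows "ennreal \<delta> * emeasure \<xi> {\<gamma>\<in>space \<xi>. ennreal \<delta> \<le> emeasure \<gamma> D} \<le> emeasure M D"
proof -
  let ?W = "{\<gamma>\<in>space \<xi>. ennreal \<delta> \<le> emeasure \<gamma> D}"
  have [measurable]: "(\<lambda>\<gamma>. emeasure \<gamma> D) \<in> borel_measurable \<xi>" using phi_meas[OF D] .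
  have W: "?W \<in> sets \<xi>" by measurable
  have "emeasure M D = (\<integral>\<^sup>+ x. indicator D x \<partial>M)" using D by simp
  also have "\<dots> = (\<integral>\<^sup>+ \<gamma>. (\<integral>\<^sup>+ x. indicator D x \<partial>\<gamma>) \<partial>\<xi>)" using bary D
    by (intro bary[rule_format]) (use D in auto)
  also have "\<dots> = (\<integral>\<^sup>+ \<gamma>. emeasure \<gamma> D \<partial>\<xi>)"
    by (intro nn_integral_cong) (use D in \<open>auto simp: space_xi\<close>)
  finally have e: "emeasure M D = (\<integral>\<^sup>+ \<gamma>. emeasure \<gamma> D \<partial>\<xi>)" .
  have "ennreal \<delta> * emeasure \<xi> ?W = (\<integral>\<^sup>+ \<gamma>. ennreal \<delta> * indicator ?W \<gamma> \<partial>\<xi>)"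
    using nn_integral_cmult_indicator[OF W] by simp
  also have "\<dots> \<le> (\<integral>\<^sup>+ \<gamma>. emeasure \<gamma> D \<partial>\<xi>)"
    by (intro nn_integral_mono) (auto simp: indicator_def)
  finally show ?thesis using e by simp
qed

end



context qf begin

lemma key:
  assumes B: "B \<in> sets M"
    and conv: "(\<lambda>k. emeasure M (sd ((T ^^ n k) -` B \<inter> space M) B)) \<longlonglongrightarrow> 0"
  shows "{\<gamma>\<in>space \<xi>. emeasure \<gamma> B \<le> c} \<in> rigC \<xi> (Tstar M T) n"
proof -
  interpret prob_space \<xi> by (rule P)
  let ?S = "Tstar M T"
  let ?\<Omega> = "space \<xi>"
  define E where "E = {\<gamma>\<in>?\<Omega>. emeasure \<gamma> B \<le> c}"
  have [measurable]: "(\<lambda>\<gamma>. emeasure \<gamma> B) \<in> borel_measurable \<xi>" using phi_meas[OF B] .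
  have Es: "E \<in> sets \<xi>" unfolding E_def by measurable
  show ?thesis
  proof (cases "c = \<top>")
    case True
    then have "E = ?\<Omega>" by (auto simp: E_def)
    moreover have "sd ((?S ^^ n k) -` ?\<Omega> \<inter> ?\<Omega>) ?\<Omega> = {}" for k
      using measurable_space[OF funpow_meas[OF S_meas, of "n k"]] by (auto simp: sd_def)
    ultimately show ?thesis using Es unfolding E_def[symmetric] by (simp add: rigC_def)
  next
    case False
    define Bk where "Bk k = (T ^^ n k) -` B \<inter> space M" for k
    define D where "D k = sd (Bk k) B" for k
    have Bks: "Bk k \<in> sets M" for k unfolding Bk_def using funpow_meas[OF T] B by (auto intro: measurable_sets)
    have Ds: "D k \<in> sets M" for k unfolding D_def sd_def using Bks B by auto
    define V where "V j = {\<gamma>\<in>?\<Omega>. c < emeasure \<gamma> B \<and> emeasure \<gamma> B \<le> c + ennreal (1 / Suc j)}" for j :: nat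
    have Vs: "V j \<in> sets \<xi>" for j unfolding V_def by measurable
    have "decseq V"
    proof (rule decseq_SucI)
      fix j
      have "ennreal (1 / Suc (Suc j)) \<le> ennreal (1 / Suc j)"
        by (intro ennreal_leI divide_left_mono) auto
      then have "c + ennreal (1 / Suc (Suc j)) \<le> c + ennreal (1 / Suc j)" by (rule add_left_mono)
      then show "V (Suc j) \<subseteq> V j" unfolding V_def by (auto intro: order_trans)
    qed
    moreover have "(\<Inter>j. V j) = {}"
      using ennreal_small_eps[OF False] unfolding V_def by (fastforce simp: not_le[symmetric])
    ultimately have Vlim: "(\<lambda>j. measure \<xi> (V j)) \<longlonglongrightarrow> 0"
      using finite_Lim_measure_decseq[of V] Vs by auto
    have pre: "(?S ^^ n k) -` {\<gamma>\<in>?\<Omega>. Q (emeasure \<gamma> B)} \<inter> ?\<Omega> = {\<gamma>\<in>?\<Omega>. Q (emeasure \<gamma> (Bk k))}" for k Q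
      unfolding Bk_def by (rule pre_eq[OF B])
    have preV: "(?S ^^ n k) -` V j \<inter> ?\<Omega> = {\<gamma>\<in>?\<Omega>. c < emeasure \<gamma> (Bk k) \<and> emeasure \<gamma> (Bk k) \<le> c + ennreal (1 / Suc j)}" for k j
      unfolding V_def using pre[of k "\<lambda>x. c < x \<and> x \<le> c + ennreal (1 / Suc j)"] by simp
    have preE: "(?S ^^ n k) -` E \<inter> ?\<Omega> = {\<gamma>\<in>?\<Omega>. emeasure \<gamma> (Bk k) \<le> c}" for k
      unfolding E_def using pre[of k "\<lambda>x. x \<le> c"] by simp
    have sp: "\<gamma> \<in> ?\<Omega> \<Longrightarrow> sets \<gamma> = sets M" for \<gamma> by (simp add: space_xi)
    have sub1: "emeasure \<gamma> B \<le> emeasure \<gamma> (Bk k) + emeasure \<gamma> (D k)" if g: "\<gamma> \<in> ?\<Omega>" for \<gamma> k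
    proof -
      have "emeasure \<gamma> B \<le> emeasure \<gamma> (Bk k \<union> D k)"
        using sp[OF g] Bks Ds by (intro emeasure_mono) (auto simp: D_def sd_def)
      also have "\<dots> \<le> emeasure \<gamma> (Bk k) + emeasure \<gamma> (D k)"
        using sp[OF g] Bks Ds by (intro emeasure_subadditive) auto
      finally show ?thesis .
    qed
    have sub2: "emeasure \<gamma> (Bk k) \<le> emeasure \<gamma> B + emeasure \<gamma> (D k)" if g: "\<gamma> \<in> ?\<Omega>" for \<gamma> k
    proof -
      have "emeasure \<gamma> (Bk k) \<le> emeasure \<gamma> (B \<union> D k)"
        using sp[OF g] Bks Ds B by (intro emeasure_mono) (auto simp: D_def sd_def)
      also have "\<dots> \<le> emeasure \<gamma> B + emeasure \<gamma> (D k)"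
        using sp[OF g] B Ds by (intro emeasure_subadditive) auto
      finally show ?thesis .
    qed
    define W where "W \<delta> k = {\<gamma>\<in>?\<Omega>. ennreal \<delta> \<le> emeasure \<gamma> (D k)}" for \<delta> k
    have Ws: "W \<delta> k \<in> sets \<xi>" for \<delta> k
    proof -
      have [measurable]: "(\<lambda>\<gamma>. emeasure \<gamma> (D k)) \<in> borel_measurable \<xi>" using phi_meas[OF Ds] .
      show ?thesis unfolding W_def by measurable
    qed
    have incl: "sd ((?S ^^ n k) -` E \<inter> ?\<Omega>) E \<subseteq> V j \<union> ((?S ^^ n k) -` V j \<inter> ?\<Omega>) \<union> W (1 / Suc j) k" for k j
    proof
      fix \<gamma> assume "\<gamma> \<in> sd ((?S ^^ n k) -` E \<inter> ?\<Omega>) E"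
      then have g: "\<gamma> \<in> ?\<Omega>" and cs: "(emeasure \<gamma> (Bk k) \<le> c \<and> \<not> emeasure \<gamma> B \<le> c) \<or> (emeasure \<gamma> B \<le> c \<and> \<not> emeasure \<gamma> (Bk k) \<le> c)"
        unfolding preE by (auto simp: sd_def E_def)
      let ?d = "ennreal (1 / Suc j)"
      show "\<gamma> \<in> V j \<union> ((?S ^^ n k) -` V j \<inter> ?\<Omega>) \<union> W (1 / Suc j) k"
      proof (cases "emeasure \<gamma> B \<le> c + ?d \<and> emeasure \<gamma> (Bk k) \<le> c + ?d")
        case True
        then show ?thesis using cs g unfolding preV by (auto simp: V_def not_le)
      next
        case nd: False
        have "?d < emeasure \<gamma> (D k)"
        proof (cases "emeasure \<gamma> (Bk k) \<le> c")
          case True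
          then have "c + ?d < emeasure \<gamma> B" using nd cs by (auto simp: not_le)
          then show ?thesis using ennreal_ineq[OF False _ sub1[OF g] True] by blast
        next
          case F2: False
          then have "emeasure \<gamma> B \<le> c" using cs by auto
          moreover have "c + ?d < emeasure \<gamma> (Bk k)" using nd cs F2 by (auto simp: not_le)
          ultimately show ?thesis using ennreal_ineq[OF False _ sub2[OF g]] by blast
        qed
        then show ?thesis using g by (auto simp: W_def)
      qed
    qed
    have "(\<lambda>k. measure \<xi> (sd ((?S ^^ n k) -` E \<inter> ?\<Omega>) E)) \<longlonglongrightarrow> 0"
    proof (rule LIMSEQ_I)
      fix e :: real assume e: "0 < e"
      obtain j where j: "measure \<xi> (V j) < e / 4"
        using LIMSEQ_D[OF Vlim, of "e/4"] e by fastforce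
      define \<delta> where "\<delta> = 1 / real (Suc j)"
      have del: "0 < \<delta>" by (simp add: \<delta>_def)
      have "0 < ennreal (\<delta> * (e / 4))" using del e by (simp add: ennreal_zero_less_mult_iff)
      then have "eventually (\<lambda>k. emeasure M (D k) < ennreal (\<delta> * (e / 4))) sequentially"
        using conv unfolding D_def Bk_def by (rule order_tendstoD(2)[rotated])
      then obtain N where N: "\<And>k. k \<ge> N \<Longrightarrow> emeasure M (D k) < ennreal (\<delta> * (e / 4))"
        by (auto simp: eventually_sequentially)
      show "\<exists>N. \<forall>k\<ge>N. norm (measure \<xi> (sd ((?S ^^ n k) -` E \<inter> ?\<Omega>) E) - 0) < e"
      proof (intro exI allI impI)
        fix k assume k: "N \<le> k"
        have "ennreal \<delta> * emeasure \<xi> (W \<delta> k) \<le> emeasure M (D k)"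
          unfolding W_def by (rule markov_part[OF Ds del])
        also have "\<dots> < ennreal (\<delta> * (e / 4))" using N[OF k] .
        finally have "ennreal (\<delta> * measure \<xi> (W \<delta> k)) < ennreal (\<delta> * (e / 4))"
          using del by (simp add: emeasure_eq_measure ennreal_mult)
        then have "\<delta> * measure \<xi> (W \<delta> k) < \<delta> * (e / 4)"
          using del by (subst (asm) ennreal_less_iff) auto
        then have Wm: "measure \<xi> (W \<delta> k) < e / 4" using del by simp
        have pm: "measure \<xi> ((?S ^^ n k) -` V j \<inter> ?\<Omega>) = measure \<xi> (V j)"
          using funpow_pres_measure[OF S_meas d Vs] .
        have mp: "(?S ^^ n k) -` V j \<inter> ?\<Omega> \<in> sets \<xi>"
          using funpow_meas[OF S_meas] Vs by (auto intro: measurable_sets)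
        have m1: "measure \<xi> (sd ((?S ^^ n k) -` E \<inter> ?\<Omega>) E) \<le> measure \<xi> (V j \<union> ((?S ^^ n k) -` V j \<inter> ?\<Omega>) \<union> W \<delta> k)"
          using incl[of k j] Vs mp Ws by (intro finite_measure_mono) (auto simp: \<delta>_def)
        have m2: "measure \<xi> (V j \<union> ((?S ^^ n k) -` V j \<inter> ?\<Omega>) \<union> W \<delta> k) \<le> measure \<xi> (V j \<union> ((?S ^^ n k) -` V j \<inter> ?\<Omega>)) + measure \<xi> (W \<delta> k)"
          using Vs mp Ws by (intro measure_Un_le) auto
        have m3: "measure \<xi> (V j \<union> ((?S ^^ n k) -` V j \<inter> ?\<Omega>)) \<le> measure \<xi> (V j) + measure \<xi> ((?S ^^ n k) -` V j \<inter> ?\<Omega>)"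
          using Vs mp by (intro measure_Un_le) auto
        have "measure \<xi> (sd ((?S ^^ n k) -` E \<inter> ?\<Omega>) E) < e" using m1 m2 m3 pm j Wm e by linarith
        then show "norm (measure \<xi> (sd ((?S ^^ n k) -` E \<inter> ?\<Omega>) E) - 0) < e" by simp
      qed
    qed
    then show ?thesis using Es unfolding E_def[symmetric] by (simp add: rigC_def)
  qed
qed

end



context qf begin

lemma allB:
  assumes sf: "sigma_finite_measure M"
    and rig: "\<forall>A \<in> sets M. emeasure M A < \<infinity> \<longrightarrow>
        ((\<lambda>k. emeasure M ((((T ^^ n k) -` A \<inter> space M) - A) \<union> (A - ((T ^^ n k) -` A \<inter> space M))))
          \<longlongrightarrow> 0) sequentially"
    and B: "B \<in> sets M"
  shows "{\<gamma>\<in>space \<xi>. emeasure \<gamma> B \<le> c} \<in> rigC \<xi> (Tstar M T) n"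
proof -
  obtain X :: "nat \<Rightarrow> 'a set" where X: "range X \<subseteq> sets M" "(\<Union>i. X i) = space M"
    "\<And>i. emeasure M (X i) \<noteq> \<infinity>" "incseq X"
    using sigma_finite_measure.sigma_finite_incseq[OF sf] by metis
  define Bj where "Bj j = B \<inter> X j" for j
  have Bjs: "Bj j \<in> sets M" for j using X(1) B by (auto simp: Bj_def)
  have fin: "emeasure M (Bj j) < \<infinity>" for j
    using emeasure_mono[of "Bj j" "X j" M] X(1) X(3)[of j] by (auto simp: Bj_def less_top intro: order.strict_trans1)
  have cj: "{\<gamma>\<in>space \<xi>. emeasure \<gamma> (Bj j) \<le> c} \<in> rigC \<xi> (Tstar M T) n" for j
    using rig[rule_format, OF Bjs fin] by (intro key[OF Bjs]) (simp add: sd_def)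
  have sig: "sigma_algebra (space \<xi>) (rigC \<xi> (Tstar M T) n)"
    using rigC_sigma[OF P S_meas d] .
  have incB: "incseq Bj" using X(4) by (auto simp: Bj_def incseq_def)
  have UB: "(\<Union>j. Bj j) = B" using X(2) sets.sets_into_space[OF B] by (auto simp: Bj_def)
  have eq: "{\<gamma>\<in>space \<xi>. emeasure \<gamma> B \<le> c} = (\<Inter>j. {\<gamma>\<in>space \<xi>. emeasure \<gamma> (Bj j) \<le> c})"
  proof -
    have "emeasure \<gamma> B = (SUP j. emeasure \<gamma> (Bj j))" if "\<gamma> \<in> space \<xi>" for \<gamma>
    proof -
      have "sets \<gamma> = sets M" using that by (simp add: space_xi)
      then have "range Bj \<subseteq> sets \<gamma>" using Bjs by auto
      then show ?thesis using SUP_emeasure_incseq[of Bj \<gamma>] incB UB by simp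
    qed
    then show ?thesis by (auto simp: SUP_le_iff)
  qed
  have "(\<Inter>j. {\<gamma>\<in>space \<xi>. emeasure \<gamma> (Bj j) \<le> c}) \<in> rigC \<xi> (Tstar M T) n"
    using sigma_algebra.countable_INT[OF sig, of "\<lambda>j. {\<gamma>\<in>space \<xi>. emeasure \<gamma> (Bj j) \<le> c}" UNIV] cj
    by auto
  then show ?thesis using eq by simp
qed

lemma sets_sub:
  assumes sf: "sigma_finite_measure M"
    and rig: "\<forall>A \<in> sets M. emeasure M A < \<infinity> \<longrightarrow>
        ((\<lambda>k. emeasure M ((((T ^^ n k) -` A \<inter> space M) - A) \<union> (A - ((T ^^ n k) -` A \<inter> space M))))
          \<longlongrightarrow> 0) sequentially"
  shows "sets \<xi> \<subseteq> rigC \<xi> (Tstar M T) n"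
proof -
  have sig: "sigma_algebra (space \<xi>) (rigC \<xi> (Tstar M T) n)"
    using rigC_sigma[OF P S_meas d] .
  let ?N = "measure_of (space \<xi>) (rigC \<xi> (Tstar M T) n) (\<lambda>_. 0)"
  have cP: "rigC \<xi> (Tstar M T) n \<subseteq> Pow (space \<xi>)" using sets.sets_into_space by (auto simp: rigC_def)
  have sN: "sets ?N = rigC \<xi> (Tstar M T) n"
    using sets_measure_of_conv[of "space \<xi>" "rigC \<xi> (Tstar M T) n"] sigma_algebra.sigma_sets_eq[OF sig]
      cP by simp
  have spN: "space ?N = space \<xi>" by (simp add: space_measure_of_conv)
  have "Gstar M \<subseteq> rigC \<xi> (Tstar M T) n"
  proof
    fix A assume "A \<in> Gstar M"
    then obtain B a b where A: "A = {\<gamma>. sets \<gamma> = sets M \<and> emeasure \<gamma> B \<in> {a..b}}" and B: "B \<in> sets M"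
      by (auto simp: Gstar_def)
    have "(\<lambda>\<gamma>. emeasure \<gamma> B) \<in> borel_measurable ?N"
    proof (rule borel_measurableI_le)
      fix y show "{x \<in> space ?N. emeasure x B \<le> y} \<in> sets ?N"
        unfolding sN spN by (rule allB[OF sf rig B])
    qed
    then have "(\<lambda>\<gamma>. emeasure \<gamma> B) -` {a..b} \<inter> space ?N \<in> sets ?N"
      by (rule measurable_sets) auto
    moreover have "(\<lambda>\<gamma>. emeasure \<gamma> B) -` {a..b} \<inter> space ?N = A"
    proof -
      have "space ?N = {\<gamma>. sets \<gamma> = sets M}" using spN space_xi by simp
      then show ?thesis using A by auto
    qed
    ultimately show "A \<in> rigC \<xi> (Tstar M T) n" using sN by simp
  qed
  then have "sigma_sets (space \<xi>) (Gstar M) \<subseteq> rigC \<xi> (Tstar M T) n"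
    by (rule sigma_algebra.sigma_sets_subset[OF sig])
  then show ?thesis using sx sets_Xstar[of M] space_xi by simp
qed

end



theorem proposition3p1:
  fixes M :: "'a measure" and T :: "'a \<Rightarrow> 'a" and S :: "'b::polish_space set"
    and \<xi> :: "'a measure measure"
  assumes "sigma_finite_measure M"
    and "standard_borel_via M S"
    and "mps M T"
    and "rigid M T"
    and "quasi_factor M T \<xi>"
  shows "rigid \<xi> (Tstar M T)"
proof -
  from assms(3) have T: "T \<in> measurable M M" by (simp add: mps_def)
  from assms(5) have qfs: "prob_space \<xi>" "sets \<xi> = sets (Xstar M)" "distr \<xi> \<xi> (Tstar M T) = \<xi>"
    "\<forall>f \<in> borel_measurable M. (\<integral>\<^sup>+ x. f x \<partial>M) = (\<integral>\<^sup>+ \<gamma>. (\<integral>\<^sup>+ x. f x \<partial>\<gamma>) \<partial>\<xi>)"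
    by (auto simp: quasi_factor_def)
  interpret pr: prob_space \<xi> by (rule qfs(1))
  interpret qf M T \<xi> using qfs T by (intro qf.intro) auto
  from assms(4) obtain n where n: "strict_mono n" and rig: "\<forall>A \<in> sets M. emeasure M A < \<infinity> \<longrightarrow>
        ((\<lambda>k. emeasure M ((((T ^^ n k) -` A \<inter> space M) - A) \<union> (A - ((T ^^ n k) -` A \<inter> space M))))
          \<longlongrightarrow> 0) sequentially"
    unfolding rigid_def by blast
  have sub: "sets \<xi> \<subseteq> rigC \<xi> (Tstar M T) n" by (rule sets_sub[OF assms(1) rig])
  show ?thesis unfolding rigid_def
  proof (intro exI[of _ n] conjI ballI impI)
    show "strict_mono n" by (rule n)
    fix A assume A: "A \<in> sets \<xi>"
    have "(\<lambda>k. measure \<xi> (sd ((Tstar M T ^^ n k) -` A \<inter> space \<xi>) A)) \<longlonglongrightarrow> 0"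
      using sub A by (auto simp: rigC_def)
    then have "(\<lambda>k. ennreal (measure \<xi> (sd ((Tstar M T ^^ n k) -` A \<inter> space \<xi>) A))) \<longlonglongrightarrow> ennreal 0"
      by (rule tendsto_ennrealI)
    then show "(\<lambda>k. emeasure \<xi> (((Tstar M T ^^ n k) -` A \<inter> space \<xi> - A) \<union> (A - (Tstar M T ^^ n k) -` A \<inter> space \<xi>))) \<longlonglongrightarrow> 0"
      by (simp add: sd_def pr.emeasure_eq_measure)
  qed
qed

end
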